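(* Let $T_{ab}$ be a rank-2 tensor. (a) The following are equivalent: $T_{ac}T_b{}^c=0$; $T_a{}^b$ is a singular null-cone preserving map; $T_{ab}=s_ak_b$ for some covector $s$ and null covector $k$. (b) The following are equivalent: $T_{ac}T_b{}^c=0$ and $T_{ca}T^c{}_b=0$; $T_a{}^b$ is a singular null-cone bi-preserving map; $T_{ab}=n_ak_b$ for null covectors $n,k$ (or $T=0$). In case (b), $T_{ab}\in\mathcal{DP}\cup-\mathcal{DP}$.
   Context: Lorentzian metric $g_{ab}$ of signature $(+,-,\dots,-)$, dimension $N\ge3$, with a time orientation; null: $v\neq0$, $v_av^a=0$. $T_a{}^b$ is null-cone preserving if $k^aT_a{}^b$ is null or zero for all null $k$; bi-preserving if moreover $T_a{}^bk_b$ is null or zero for all null $k$; singular if $\det(T_a{}^b)=0$. $\mathcal{DP}$: rank-2 tensors with $T_{ab}u^av^b\ge0$ for all causal (nonzero, $v\cdot v\ge0$) future-pointing $u,v$; $-\mathcal{DP}$ its negatives. *)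

theory Defs
  imports "HOL-Analysis.Analysis"
begin

text \<open>Algebraic setting at a point: components w.r.t. a basis indexed by the finite type 'n.
  The metric g_ab is the matrix g (g $ a $ b = g_ab), its inverse g^ab is matrix_inv g.
  Vectors (upper index) and covectors (lower index) are both elements of real^'n.
  A rank-2 tensor T_ab is a matrix T with T $ a $ b = T_ab.\<close>

definition lorentzian :: "real^'n^'n \<Rightarrow> bool" where
  "lorentzian g \<longleftrightarrow> transpose g = g \<and>
     (\<exists>P::real^'n^'n. invertible P \<and> (\<exists>i0. \<forall>i j.
        (transpose P ** g ** P) $ i $ j = (if i = j then (if i = i0 then 1 else -1) else 0)))"

definition gvec :: "real^'n^'n \<Rightarrow> real^'n \<Rightarrow> real^'n \<Rightarrow> real" where
  "gvec g u v = u \<bullet> (g *v v)"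

definition gcov :: "real^'n^'n \<Rightarrow> real^'n \<Rightarrow> real^'n \<Rightarrow> real" where
  "gcov g w z = w \<bullet> (matrix_inv g *v z)"

definition null_vec :: "real^'n^'n \<Rightarrow> real^'n \<Rightarrow> bool" where
  "null_vec g v \<longleftrightarrow> v \<noteq> 0 \<and> gvec g v v = 0"

definition null_cov :: "real^'n^'n \<Rightarrow> real^'n \<Rightarrow> bool" where
  "null_cov g w \<longleftrightarrow> w \<noteq> 0 \<and> gcov g w w = 0"

text \<open>time orientation given by a timelike vector tau: a causal vector v is future-pointing
  iff g(tau,v) > 0\<close>
definition causal_future :: "real^'n^'n \<Rightarrow> real^'n \<Rightarrow> real^'n \<Rightarrow> bool" where
  "causal_future g tau v \<longleftrightarrow> v \<noteq> 0 \<and> gvec g v v \<ge> 0 \<and> gvec g tau v > 0"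

text \<open>the mixed tensor T_a^b = T_ac g^cb\<close>
definition mixed :: "real^'n^'n \<Rightarrow> real^'n^'n \<Rightarrow> real^'n^'n" where
  "mixed g T = T ** matrix_inv g"

definition null_cone_preserving :: "real^'n^'n \<Rightarrow> real^'n^'n \<Rightarrow> bool" where
  "null_cone_preserving g T \<longleftrightarrow>
     (\<forall>k. null_vec g k \<longrightarrow> (let v = k v* mixed g T in v = 0 \<or> null_vec g v))"

definition null_cone_bi_preserving :: "real^'n^'n \<Rightarrow> real^'n^'n \<Rightarrow> bool" where
  "null_cone_bi_preserving g T \<longleftrightarrow> null_cone_preserving g T \<and>
     (\<forall>k. null_vec g k \<longrightarrow> (let w = mixed g T *v (g *v k) in w = 0 \<or> null_cov g w))"

definition singular_map :: "real^'n^'n \<Rightarrow> real^'n^'n \<Rightarrow> bool" where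
  "singular_map g T \<longleftrightarrow> det (mixed g T) = 0"

definition DP :: "real^'n^'n \<Rightarrow> real^'n \<Rightarrow> (real^'n^'n) set" where
  "DP g tau = {T. \<forall>u v. causal_future g tau u \<longrightarrow> causal_future g tau v \<longrightarrow> u \<bullet> (T *v v) \<ge> 0}"

definition outer :: "real^'n \<Rightarrow> real^'n \<Rightarrow> real^'n^'n" where
  "outer s k = (\<chi> a b. s $ a * k $ b)"

end

theory Submission
  imports Defs
begin

definition etam :: "'n \<Rightarrow> real^'n^'n" where
  "etam i0 = (\<chi> i j. if i = j then (if i = i0 then 1 else -1) else 0)"

lemma if_mult_zero: "(if b then c else 0) * (w::real) = (if b then c * w else 0)" by simp

lemma etam_mv: "etam i0 *v z = (2 * z$i0) *\<^sub>R axis i0 1 - z"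
proof -
  have "(etam i0 *v z) $ i = (if i = i0 then 1 else -1) * z$i" for i
    unfolding etam_def matrix_vector_mult_def by (simp add: if_mult_zero sum.delta sum.delta')
  then show ?thesis by (simp add: vec_eq_iff axis_def)
qed

lemma etam_form: "y \<bullet> (etam i0 *v z) = 2 * y$i0 * z$i0 - y \<bullet> z"
  by (simp add: etam_mv inner_diff_right inner_axis algebra_simps)

lemma coords: fixes P h :: "real^'n^'n" shows "(P *v y) \<bullet> (h *v (P *v z)) = y \<bullet> ((transpose P ** h ** P) *v z)"
proof -
  have "(P *v y) = y v* transpose P" by (simp only: vector_transpose_matrix)
  then have "(P *v y) \<bullet> (h *v (P *v z)) = y \<bullet> (transpose P *v (h *v (P *v z)))"
    by (simp only: dot_lmul_matrix)
  then show ?thesis by (simp only: matrix_vector_mul_assoc matrix_mul_assoc)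
qed

lemma sym_inner: fixes G :: "real^'n^'n" assumes "transpose G = G" shows "x \<bullet> (G *v y) = y \<bullet> (G *v x)"
proof -
  have "x \<bullet> (G *v y) = (x v* G) \<bullet> y" by (simp only: dot_lmul_matrix)
  also have "x v* G = transpose G *v x" by simp
  finally show ?thesis using assms by (simp add: inner_commute)
qed

lemma row_lemma: "(A ** B ** transpose C) $ i $ j = A$i \<bullet> (B *v C$j)"
  by (simp add: matrix_matrix_mult_def matrix_vector_mult_def inner_vec_def transpose_def
      sum_distrib_left sum_distrib_right ac_simps) (subst sum.swap, simp)

lemma outer_row: "outer s k $ i = s$i *\<^sub>R k"
  by (simp add: outer_def vec_eq_iff)

lemma outer_transpose: "transpose (outer s k) = outer k s"
  by (simp add: outer_def transpose_def vec_eq_iff)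

lemma outer_mv: "outer n k *v v = (k \<bullet> v) *\<^sub>R n"
  by (simp add: outer_def vec_eq_iff matrix_vector_mult_def inner_vec_def sum_distrib_left ac_simps)


lemma par_eta:
  fixes a b :: "real^'n"
  assumes "a \<bullet> (etam i0 *v a) = 0" "b \<bullet> (etam i0 *v b) = 0" "a \<bullet> (etam i0 *v b) = 0" "a \<noteq> 0"
  shows "\<exists>c. b = c *\<^sub>R a"
proof -
  have h1: "a \<bullet> a = 2 * (a$i0)^2" "b \<bullet> b = 2 * (b$i0)^2" "a \<bullet> b = 2 * a$i0 * b$i0"
    using assms(1-3) by (simp_all add: etam_form power2_eq_square)
  define c where "c = b$i0 *\<^sub>R a - a$i0 *\<^sub>R b"
  have "c \<bullet> c = (b$i0)^2 * (a \<bullet> a) - 2 * a$i0 * b$i0 * (a \<bullet> b) + (a$i0)^2 * (b \<bullet> b)"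
    by (simp add: c_def inner_diff_left inner_diff_right inner_commute power2_eq_square algebra_simps)
  also have "\<dots> = 0" using h1 by (simp add: power2_eq_square algebra_simps)
  finally have "c = 0" by simp
  have "a$i0 \<noteq> 0" using h1(1) assms(4) by auto
  with \<open>c = 0\<close> have "b = (b$i0 / a$i0) *\<^sub>R a"
    by (simp add: c_def algebra_simps) (metis (no_types) divide_inverse_commute scaleR_scaleR right_inverse scaleR_one mult.commute)
  then show ?thesis by blast
qed

lemma qf: fixes B :: "real^'n^'n" assumes Bs: "\<And>i j. B$i$j = B$j$i" shows "(\<alpha> *\<^sub>R axis i 1 + \<beta> *\<^sub>R axis j 1 + \<gamma> *\<^sub>R axis k 1) \<bullet> (B *v (\<alpha> *\<^sub>R axis i 1 + \<beta> *\<^sub>R axis j 1 + \<gamma> *\<^sub>R axis k 1))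
     = \<alpha>*\<alpha>*B$i$i + \<beta>*\<beta>*B$j$j + \<gamma>*\<gamma>*B$k$k + 2*\<alpha>*\<beta>*B$i$j + 2*\<alpha>*\<gamma>*B$i$k + 2*\<beta>*\<gamma>*B$j$k"
proof -
  have ax: "axis i 1 \<bullet> (B *v axis j 1) = B$i$j" for i j
    by (simp add: inner_axis' matrix_vector_mul_component inner_axis)
  show ?thesis
    apply (simp only: matrix_vector_right_distrib matrix_vector_mult_scaleR inner_add_left inner_add_right inner_scaleR_left inner_scaleR_right ax)
    apply (simp only: Bs[of j i] Bs[of k i] Bs[of k j])
    by (simp add: algebra_simps)
qed
lemma ef: "j \<noteq> i0 \<Longrightarrow> k \<noteq> i0 \<Longrightarrow> (\<alpha> *\<^sub>R axis i0 1 + \<beta> *\<^sub>R axis j 1 + \<gamma> *\<^sub>R axis k 1) \<bullet> (etam i0 *v (\<alpha> *\<^sub>R axis i0 1 + \<beta> *\<^sub>R axis j 1 + \<gamma> *\<^sub>R axis k 1))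
     = \<alpha>*\<alpha> - \<beta>*\<beta> - \<gamma>*\<gamma> - 2*\<beta>*\<gamma>*(if j = k then 1 else 0)"
  apply (simp only: etam_form inner_add_left inner_add_right inner_scaleR_left inner_scaleR_right inner_axis_axis)
  by (auto simp: algebra_simps axis_def)

lemma quad_eta:
  fixes B :: "real^'n^'n"
  assumes sym: "transpose B = B"
    and q: "\<And>y. y \<bullet> (etam i0 *v y) = 0 \<Longrightarrow> y \<bullet> (B *v y) = 0"
  shows "B = B$i0$i0 *\<^sub>R etam i0"
proof -
  have Bs: "B$i$j = B$j$i" for i j using sym by (metis transpose_def vec_lambda_beta)
  note qf = qf[of B, OF Bs]
  have A: "B$i0$j = 0 \<and> B$j$j = - B$i0$i0" if "j \<noteq> i0" for j
  proof -
    have "B$i0$i0 + B$j$j + 2 * B$i0$j = 0"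
      using q[of "1 *\<^sub>R axis i0 1 + 1 *\<^sub>R axis j 1 + 0 *\<^sub>R axis j 1"] ef[of j i0 j 1 1 0] qf[of 1 i0 1 j 0 j] that by simp
    moreover have "B$i0$i0 + B$j$j - 2 * B$i0$j = 0"
      using q[of "1 *\<^sub>R axis i0 1 + (-1) *\<^sub>R axis j 1 + 0 *\<^sub>R axis j 1"] ef[of j i0 j 1 "-1" 0] qf[of 1 i0 "-1" j 0 j] that by simp
    ultimately show ?thesis by linarith
  qed
  have C: "B$j$k = 0" if "j \<noteq> i0" "k \<noteq> i0" "j \<noteq> k" for j k
  proof -
    have s2: "sqrt 2 * sqrt 2 = (2::real)" by simp
    have "sqrt 2 * sqrt 2 * B$i0$i0 + B$j$j + B$k$k + 2 * sqrt 2*B$i0$j + 2 * sqrt 2*B$i0$k + 2*B$j$k = 0"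
      using q[of "sqrt 2 *\<^sub>R axis i0 1 + 1 *\<^sub>R axis j 1 + 1 *\<^sub>R axis k 1"] ef[of j i0 k "sqrt 2" 1 1] qf[of "sqrt 2" i0 1 j 1 k] that s2
      by simp
    then show ?thesis using A[OF that(1)] A[OF that(2)] s2 by simp
  qed
  show ?thesis
  proof (subst vec_eq_iff, intro allI, subst vec_eq_iff, intro allI)
    fix i j
    show "B$i$j = (B$i0$i0 *\<^sub>R etam i0)$i$j"
      using A[of i] A[of j] C[of i j] Bs[of i j]
      by (cases "i = i0"; cases "j = i0") (auto simp: etam_def)
  qed
qed

lemma etam_sq: "etam i0 ** etam i0 = mat 1"
proof -
  have "(etam i0 ** etam i0) *v x = mat 1 *v x" for x
    by (simp add: matrix_vector_mul_assoc[symmetric] etam_mv vec_eq_iff axis_def)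
  then show ?thesis by (simp add: matrix_eq)
qed

lemma inv_facts:
  fixes g :: "real^'n^'n"
  assumes "invertible g"
  shows "g ** matrix_inv g = mat 1" "matrix_inv g ** g = mat 1"
proof -
  have "\<exists>A'. g ** A' = mat 1 \<and> A' ** g = mat 1" using assms by (simp add: invertible_def)
  then have "g ** matrix_inv g = mat 1 \<and> matrix_inv g ** g = mat 1"
    unfolding matrix_inv_def by (rule someI_ex)
  then show "g ** matrix_inv g = mat 1" "matrix_inv g ** g = mat 1" by auto
qed

lemma lor_basic:
  fixes g :: "real^'n^'n"
  assumes "lorentzian g"
  shows "transpose g = g" "invertible g" "\<exists>(P::real^'n^'n) i0. invertible P \<and> transpose P ** g ** P = etam i0"
proof -
  obtain P :: "real^'n^'n" where P: "invertible P" and E0: "\<exists>i0. \<forall>i j.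
        (transpose P ** g ** P) $ i $ j = (if i = j then (if i = i0 then 1 else -1) else 0)"
    using assms unfolding lorentzian_def by blast
  obtain i0 where E: "\<forall>i j.
        (transpose P ** g ** P) $ i $ j = (if i = j then (if i = i0 then 1 else -1) else 0)"
    using E0 by blast
  have E': "transpose P ** g ** P = etam i0" using E by (simp add: vec_eq_iff etam_def)
  show "transpose g = g" using assms unfolding lorentzian_def by blast
  show "\<exists>(P::real^'n^'n) i0. invertible P \<and> transpose P ** g ** P = etam i0" using P E' by blast
  have "det (etam i0) \<noteq> 0"
    using etam_sq[of i0] det_mul[of "etam i0" "etam i0"] by auto
  then have "det (transpose P ** g ** P) \<noteq> 0" using E' by simp
  then have "det g \<noteq> 0" by (simp add: det_mul)
  then show "invertible g" by (simp add: invertible_det_nz)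
qed

lemma inv_sym:
  fixes g :: "real^'n^'n"
  assumes "invertible g" "transpose g = g"
  shows "transpose (matrix_inv g) = matrix_inv g"
proof -
  have "transpose (matrix_inv g) = transpose (matrix_inv g) ** (g ** matrix_inv g)"
    using inv_facts[OF assms(1)] by simp
  also have "\<dots> = transpose (g ** matrix_inv g) ** matrix_inv g"
    by (simp add: matrix_transpose_mul assms(2) matrix_mul_assoc)
  also have "\<dots> = matrix_inv g" using inv_facts[OF assms(1)] by simp
  finally show ?thesis .
qed

lemma par_h:
  fixes h P :: "real^'n^'n"
  assumes P: "invertible P" and E: "transpose P ** h ** P = etam i0"
    and "u \<bullet> (h *v u) = 0" "w \<bullet> (h *v w) = 0" "u \<bullet> (h *v w) = 0" "u \<noteq> 0"
  shows "\<exists>c. w = c *\<^sub>R u"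
proof -
  obtain P' where PP: "P ** P' = mat 1" "P' ** P = mat 1" using P unfolding invertible_def by blast
  define a where "a = P' *v u"
  define b where "b = P' *v w"
  have ua: "u = P *v a" and wb: "w = P *v b"
    by (simp_all add: a_def b_def matrix_vector_mul_assoc PP)
  have "a \<noteq> 0" using ua assms(6) by auto
  moreover have "a \<bullet> (etam i0 *v a) = 0" "b \<bullet> (etam i0 *v b) = 0" "a \<bullet> (etam i0 *v b) = 0"
    using assms(3-5) unfolding ua wb coords E by simp_all
  ultimately obtain c where "b = c *\<^sub>R a" using par_eta by blast
  then have "w = c *\<^sub>R u" by (simp add: ua wb matrix_vector_mult_scaleR)
  then show ?thesis by blast
qed

lemma quad_h:
  fixes h P A :: "real^'n^'n"
  assumes P: "invertible P" and E: "transpose P ** h ** P = etam i0"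
    and symA: "transpose A = A"
    and q: "\<And>x. x \<bullet> (h *v x) = 0 \<Longrightarrow> x \<bullet> (A *v x) = 0"
  shows "\<exists>l. A = l *\<^sub>R h"
proof -
  obtain P' where PP: "P ** P' = mat 1" "P' ** P = mat 1" using P unfolding invertible_def by blast
  define B where "B = transpose P ** A ** P"
  have sB: "transpose B = B" by (simp add: B_def matrix_transpose_mul symA matrix_mul_assoc)
  have "B = B$i0$i0 *\<^sub>R etam i0"
  proof (rule quad_eta[OF sB])
    fix y :: "real^'n" assume "y \<bullet> (etam i0 *v y) = 0"
    then have "(P *v y) \<bullet> (h *v (P *v y)) = 0" by (simp add: coords E)
    then have "(P *v y) \<bullet> (A *v (P *v y)) = 0" by (rule q)
    then show "y \<bullet> (B *v y) = 0" by (simp add: coords B_def)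
  qed
  then have BE: "B = transpose P ** (B$i0$i0 *\<^sub>R h) ** P"
    by (simp add: E[symmetric] matrix_scalar_ac scalar_matrix_assoc)
  have T1: "transpose P' ** transpose P = mat 1"
    by (metis PP(1) matrix_transpose_mul transpose_mat)
  have "A = (transpose P' ** transpose P) ** A ** (P ** P')" by (simp add: T1 PP)
  also have "\<dots> = transpose P' ** B ** P'" by (simp add: B_def matrix_mul_assoc)
  also have "\<dots> = (transpose P' ** transpose P) ** (B$i0$i0 *\<^sub>R h) ** (P ** P')"
    by (subst BE) (simp add: matrix_mul_assoc)
  also have "\<dots> = B$i0$i0 *\<^sub>R h" by (simp add: T1 PP)
  finally show ?thesis by blast
qed

lemma cs_sq: fixes y z :: "real^'n" shows "(y \<bullet> z)^2 \<le> (y \<bullet> y) * (z \<bullet> z)"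
proof -
  have "\<bar>y \<bullet> z\<bar> \<le> norm y * norm z" by (rule Cauchy_Schwarz_ineq2)
  then have "(y \<bullet> z)^2 \<le> (norm y * norm z)^2"
    by (metis abs_ge_zero power2_abs power_mono)
  also have "\<dots> = (y \<bullet> y) * (z \<bullet> z)" by (simp add: power_mult_distrib power2_norm_eq_inner)
  finally show ?thesis .
qed

lemma hw: fixes a x :: real assumes "\<bar>x\<bar> \<le> \<bar>2*a\<bar>" shows "a * x \<le> 2*a*a"
proof -
  have "a * x \<le> \<bar>a\<bar> * \<bar>x\<bar>" by (metis abs_ge_self abs_mult)
  also have "\<dots> \<le> \<bar>a\<bar> * \<bar>2*a\<bar>" using assms by (rule mult_left_mono) simp
  also have "\<dots> = 2*a*a" by (simp add: abs_mult)
  finally show ?thesis .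
qed

lemma hs: fixes a x :: real assumes "\<bar>x\<bar> < \<bar>2*a\<bar>" "a \<noteq> 0" shows "a * x < 2*a*a"
proof -
  have "a * x \<le> \<bar>a\<bar> * \<bar>x\<bar>" by (metis abs_ge_self abs_mult)
  also have "\<dots> < \<bar>a\<bar> * \<bar>2*a\<bar>" using assms by (intro mult_strict_left_mono) auto
  also have "\<dots> = 2*a*a" by (simp add: abs_mult)
  finally show ?thesis .
qed

lemma eta_weak:
  fixes y z :: "real^'n"
  assumes "y \<bullet> y \<le> 2 * (y$i0)^2" "z \<bullet> z \<le> 2 * (z$i0)^2"
  shows "y$i0 * z$i0 * (2 * y$i0 * z$i0 - y \<bullet> z) \<ge> 0"
proof -
  have "(y \<bullet> z)^2 \<le> (2 * y$i0 * z$i0)^2"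
  proof -
    have "(y \<bullet> z)^2 \<le> (y \<bullet> y) * (z \<bullet> z)" by (rule cs_sq)
    also have "\<dots> \<le> (2 * (y$i0)^2) * (2 * (z$i0)^2)"
      using assms by (intro mult_mono) auto
    finally show ?thesis by (simp add: power_mult_distrib)
  qed
  then have "\<bar>y \<bullet> z\<bar> \<le> \<bar>2 * (y$i0 * z$i0)\<bar>" by (simp only: abs_le_square_iff mult.assoc)
  then have "(y$i0 * z$i0) * (y \<bullet> z) \<le> 2 * (y$i0 * z$i0) * (y$i0 * z$i0)" by (rule hw)
  then show ?thesis by (simp add: algebra_simps)
qed

lemma eta_strict:
  fixes y z :: "real^'n"
  assumes "y \<bullet> y < 2 * (y$i0)^2" "z \<bullet> z \<le> 2 * (z$i0)^2" "z \<noteq> 0"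
  shows "y$i0 * z$i0 * (2 * y$i0 * z$i0 - y \<bullet> z) > 0"
proof -
  have zz: "z \<bullet> z > 0" using assms(3) by simp
  have z0: "z$i0 \<noteq> 0"
  proof
    assume "z$i0 = 0" then have "z \<bullet> z \<le> 0" using assms(2) by simp
    then show False using zz by linarith
  qed
  have "(y \<bullet> z)^2 < (2 * y$i0 * z$i0)^2"
  proof -
    have "(y \<bullet> z)^2 \<le> (y \<bullet> y) * (z \<bullet> z)" by (rule cs_sq)
    also have "\<dots> < (2 * (y$i0)^2) * (z \<bullet> z)"
      using assms(1) zz by simp
    also have "\<dots> \<le> (2 * (y$i0)^2) * (2 * (z$i0)^2)"
      using assms(2) by (intro mult_left_mono) auto
    finally show ?thesis by (simp add: power_mult_distrib)
  qed
  then have "\<bar>y \<bullet> z\<bar> < \<bar>2 * (y$i0 * z$i0)\<bar>" by (simp only: mult.assoc) (metis abs_ge_zero power2_abs power2_less_imp_less)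
  then have "(y$i0 * z$i0) * (y \<bullet> z) < 2 * (y$i0 * z$i0) * (y$i0 * z$i0)"
  proof (rule hs)
    have "y$i0 \<noteq> 0"
    proof
      assume "y$i0 = 0" then have "y \<bullet> y < 0" using assms(1) by simp
      moreover have "y \<bullet> y \<ge> 0" by simp
      ultimately show False by linarith
    qed
    then show "y$i0 * z$i0 \<noteq> 0" using z0 by simp
  qed
  then show ?thesis by (simp add: algebra_simps)
qed

lemma vec_sign:
  fixes g P :: "real^'n^'n"
  assumes P: "invertible P" and E: "transpose P ** g ** P = etam i0"
    and a: "null_vec g a" and tau: "gvec g tau tau > 0"
    and u: "u \<noteq> 0" "gvec g u u \<ge> 0" "gvec g tau u > 0"
  shows "gvec g a tau \<noteq> 0 \<and> gvec g a tau * gvec g a u \<ge> 0"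
proof -
  obtain P' where PP: "P ** P' = mat 1" "P' ** P = mat 1" using P unfolding invertible_def by blast
  have gv: "gvec g (P *v x) (P *v y) = 2 * x$i0 * y$i0 - x \<bullet> y" for x y
    by (simp add: gvec_def coords E etam_form)
  define al where "al = P' *v a"
  define t where "t = P' *v tau"
  define m where "m = P' *v u"
  have ea: "a = P *v al" and et: "tau = P *v t" and em: "u = P *v m"
    by (simp_all add: al_def t_def m_def matrix_vector_mul_assoc PP)
  have al0: "al \<noteq> 0" using a ea by (auto simp: null_vec_def)
  have m0: "m \<noteq> 0" using u(1) em by auto
  have haa: "al \<bullet> al \<le> 2 * (al$i0)^2" using a unfolding null_vec_def ea gv by (simp add: power2_eq_square)
  have haa': "al \<bullet> al = 2 * (al$i0)^2" using a unfolding null_vec_def ea gv by (simp add: power2_eq_square)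
  have htt: "t \<bullet> t < 2 * (t$i0)^2" using tau unfolding et gv by (simp add: power2_eq_square)
  have hmm: "m \<bullet> m \<le> 2 * (m$i0)^2" using u(2) unfolding em gv by (simp add: power2_eq_square)
  have Z: "2 * t$i0 * m$i0 - t \<bullet> m > 0" using u(3) unfolding et em gv .
  have s1: "t$i0 * m$i0 * (2 * t$i0 * m$i0 - t \<bullet> m) > 0" by (rule eta_strict[OF htt hmm m0])
  then have tm: "t$i0 * m$i0 > 0" using Z by (simp add: zero_less_mult_iff)
  have s2: "t$i0 * al$i0 * (2 * t$i0 * al$i0 - t \<bullet> al) > 0" by (rule eta_strict[OF htt haa al0])
  have s3: "al$i0 * m$i0 * (2 * al$i0 * m$i0 - al \<bullet> m) \<ge> 0" by (rule eta_weak[OF haa hmm])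
  define X where "X = 2 * t$i0 * al$i0 - t \<bullet> al"
  define Y where "Y = 2 * al$i0 * m$i0 - al \<bullet> m"
  have gX: "gvec g a tau = X" unfolding ea et gv X_def by (simp add: inner_commute algebra_simps)
  have gY: "gvec g a u = Y" unfolding ea em gv Y_def by simp
  have X0: "X \<noteq> 0" using s2 X_def by auto
  have a0: "al$i0 \<noteq> 0" using s2 by auto
  have p1: "0 \<le> t$i0 * al$i0 * X" unfolding X_def using s2 by linarith
  have p2: "0 \<le> al$i0 * m$i0 * Y" unfolding Y_def using s3 by linarith
  have "0 \<le> (t$i0 * al$i0 * X) * (al$i0 * m$i0 * Y)" using p1 p2 by (rule mult_nonneg_nonneg)
  also have "\<dots> = (t$i0 * m$i0 * (al$i0 * al$i0)) * (X * Y)" by (simp add: algebra_simps)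
  finally have "0 \<le> (t$i0 * m$i0 * (al$i0 * al$i0)) * (X * Y)" .
  moreover have "t$i0 * m$i0 * (al$i0 * al$i0) > 0" proof (rule mult_pos_pos)
    show "0 < t$i0 * m$i0" by (rule tm)
    show "0 < al$i0 * al$i0" using a0 not_real_square_gt_zero by blast
  qed
  ultimately have "X * Y \<ge> 0" by (simp add: zero_le_mult_iff)
  then show ?thesis using gX gY X0 by simp
qed

lemma cov_sign:
  fixes g :: "real^'n^'n"
  assumes lor: "lorentzian g" and n: "null_cov g n" and tau: "gvec g tau tau > 0"
    and u: "u \<noteq> 0" "gvec g u u \<ge> 0" "gvec g tau u > 0"
  shows "n \<bullet> tau \<noteq> 0 \<and> (n \<bullet> tau) * (n \<bullet> u) \<ge> 0"
proof -
  have gs: "transpose g = g" and gi: "invertible g" using lor_basic[OF lor] by auto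
  obtain P :: "real^'n^'n" and i0 where P: "invertible P" and E: "transpose P ** g ** P = etam i0"
    using lor_basic(3)[OF lor] by blast
  define G where "G = matrix_inv g"
  have gG: "g ** G = mat 1" using inv_facts[OF gi] G_def by simp
  define a where "a = G *v n"
  have ga: "g *v a = n" by (simp add: a_def matrix_vector_mul_assoc gG)
  have key: "gvec g a x = n \<bullet> x" for x
    by (simp add: gvec_def sym_inner[OF gs, of a x] ga inner_commute)
  have "null_vec g a"
  proof -
    have "a \<noteq> 0" using ga n by (auto simp: null_cov_def)
    moreover have "gvec g a a = 0" using n key[of a]
      by (simp add: null_cov_def gcov_def G_def[symmetric] a_def inner_commute)
    ultimately show ?thesis by (simp add: null_vec_def)
  qed
  from vec_sign[OF P E this tau u] show ?thesis by (simp add: key)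
qed

lemma outer_entry:
  fixes G :: "real^'n^'n"
  shows "(outer a b ** G ** transpose (outer a b)) $ i $ j = a$i * a$j * (b \<bullet> (G *v b))"
  by (simp add: row_lemma outer_row matrix_vector_mult_scaleR)

lemma zero_lemma:
  fixes g T A :: "real^'n^'n"
  assumes lor: "lorentzian g" and symA: "transpose A = A"
    and dA: "det A = det T * det (matrix_inv g) * det T" and dT: "det T = 0"
    and q: "\<And>k. gvec g k k = 0 \<Longrightarrow> k \<bullet> (A *v k) = 0"
  shows "A = 0"
proof -
  have gs: "transpose g = g" and gi: "invertible g" using lor_basic[OF lor] by auto
  obtain P :: "real^'n^'n" and i0 where P: "invertible P" and E: "transpose P ** g ** P = etam i0"
    using lor_basic(3)[OF lor] by blast
  obtain l where l: "A = l *\<^sub>R g"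
    using quad_h[OF P E symA] q unfolding gvec_def by blast
  have "l = 0"
  proof (rule ccontr)
    assume "l \<noteq> 0"
    then have "invertible A" using l scalar_invertible gi by blast
    then have "det A \<noteq> 0" by (simp add: invertible_det_nz)
    then show False using dA dT by simp
  qed
  then show ?thesis using l by simp
qed

lemma negh: "(0::real) \<le> c * x \<Longrightarrow> c < 0 \<Longrightarrow> x \<le> 0"
  by (simp add: zero_le_mult_iff)

theorem mainTheorem11:
  fixes g T :: "real^'n^'n" and tau :: "real^'n"
  assumes dim: "CARD('n) \<ge> 3"
    and lor: "lorentzian g"
    and tau: "gvec g tau tau > 0"
  shows
    "((T ** matrix_inv g ** transpose T = 0)
        \<longleftrightarrow> (singular_map g T \<and> null_cone_preserving g T))
     \<and> ((T ** matrix_inv g ** transpose T = 0)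
        \<longleftrightarrow> (\<exists>s k. null_cov g k \<and> T = outer s k))
     \<and> ((T ** matrix_inv g ** transpose T = 0 \<and> transpose T ** matrix_inv g ** T = 0)
        \<longleftrightarrow> (singular_map g T \<and> null_cone_bi_preserving g T))
     \<and> ((T ** matrix_inv g ** transpose T = 0 \<and> transpose T ** matrix_inv g ** T = 0)
        \<longleftrightarrow> (T = 0 \<or> (\<exists>n k. null_cov g n \<and> null_cov g k \<and> T = outer n k)))
     \<and> ((T ** matrix_inv g ** transpose T = 0 \<and> transpose T ** matrix_inv g ** T = 0)
        \<longrightarrow> (T \<in> DP g tau \<or> - T \<in> DP g tau))"
proof -
  have gs: "transpose g = g" and gi: "invertible g" using lor_basic[OF lor] by auto
  obtain P :: "real^'n^'n" and i0 where P: "invertible P" and E: "transpose P ** g ** P = etam i0"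
    using lor_basic(3)[OF lor] by blast
  define G where "G = matrix_inv g"
  have gG: "g ** G = mat 1" and Gg: "G ** g = mat 1" using inv_facts[OF gi] G_def by auto
  have Gs: "transpose G = G" using inv_sym[OF gi gs] G_def by simp
  have dG: "det G \<noteq> 0" using gG det_mul[of g G] by auto
  define Q where "Q = g ** P"
  have Qi: "invertible Q" using Q_def invertible_mult[OF gi P] by simp
  have EQ: "transpose Q ** G ** Q = etam i0"
  proof -
    have "transpose Q ** G ** Q = transpose P ** (g ** G) ** g ** P"
      by (simp add: Q_def matrix_transpose_mul gs matrix_mul_assoc)
    then show ?thesis using gG E by simp
  qed
  define A1 where "A1 = T ** G ** transpose T"
  define A2 where "A2 = transpose T ** G ** T"
  have sA1: "transpose A1 = A1" by (simp add: A1_def matrix_transpose_mul Gs matrix_mul_assoc)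
  have sA2: "transpose A2 = A2" by (simp add: A2_def matrix_transpose_mul Gs matrix_mul_assoc)
  have dA1: "det A1 = det T * det G * det T" by (simp add: A1_def det_mul)
  have dA2: "det A2 = det T * det G * det T" by (simp add: A2_def det_mul)
  have sing: "singular_map g T \<longleftrightarrow> det T = 0"
    using dG by (simp add: singular_map_def mixed_def det_mul G_def[symmetric])
  have F1: "gvec g (k v* mixed g T) (k v* mixed g T) = k \<bullet> (A1 *v k)" for k
  proof -
    define w where "w = transpose T *v k"
    have v: "k v* mixed g T = G *v w"
      by (simp add: mixed_def G_def[symmetric] w_def matrix_transpose_mul Gs
          matrix_vector_mul_assoc[symmetric] flip: transpose_matrix_vector)
    have "gvec g (G *v w) (G *v w) = (G *v w) \<bullet> w"
      by (simp add: gvec_def matrix_vector_mul_assoc gG)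
    also have "\<dots> = w \<bullet> (G *v w)" by (simp add: inner_commute)
    also have "\<dots> = k \<bullet> (T *v (G *v w))"
    proof -
      have "transpose T *v k = k v* T" by (simp only: transpose_matrix_vector)
      then show ?thesis unfolding w_def by (simp only: dot_lmul_matrix)
    qed
    also have "\<dots> = k \<bullet> (A1 *v k)" unfolding A1_def w_def by (simp only: matrix_vector_mul_assoc matrix_mul_assoc)
    finally show ?thesis using v by simp
  qed
  have F2: "gcov g (mixed g T *v (g *v k)) (mixed g T *v (g *v k)) = k \<bullet> (A2 *v k)" for k
  proof -
    have w: "mixed g T *v (g *v k) = T *v k"
    proof -
      have "T ** G ** g = T" by (metis Gg matrix_mul_assoc matrix_mul_rid)
      then show ?thesis unfolding mixed_def G_def[symmetric] by (simp only: matrix_vector_mul_assoc)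
    qed
    have "gcov g (T *v k) (T *v k) = (T *v k) \<bullet> (G *v (T *v k))"
      by (simp add: gcov_def G_def)
    also have "\<dots> = k \<bullet> (transpose T *v (G *v (T *v k)))"
    proof -
      have "T *v k = k v* transpose T" by (simp only: vector_transpose_matrix)
      then show ?thesis by (simp only: dot_lmul_matrix)
    qed
    also have "\<dots> = k \<bullet> (A2 *v k)" unfolding A2_def by (simp only: matrix_vector_mul_assoc matrix_mul_assoc)
    finally show ?thesis using w by simp
  qed
  have ncp: "null_cone_preserving g T \<longleftrightarrow> (\<forall>k. gvec g k k = 0 \<longrightarrow> k \<bullet> (A1 *v k) = 0)"
  proof
    assume H: "null_cone_preserving g T"
    show "\<forall>k. gvec g k k = 0 \<longrightarrow> k \<bullet> (A1 *v k) = 0"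
    proof (intro allI impI)
      fix k :: "real^'n" assume kk: "gvec g k k = 0"
      show "k \<bullet> (A1 *v k) = 0"
      proof (cases "k = 0")
        case True then show ?thesis by simp
      next
        case False
        then have "null_vec g k" using kk by (simp add: null_vec_def)
        then have "k v* mixed g T = 0 \<or> null_vec g (k v* mixed g T)"
          using H unfolding null_cone_preserving_def Let_def by blast
        then have "gvec g (k v* mixed g T) (k v* mixed g T) = 0"
          by (auto simp: null_vec_def gvec_def)
        then show ?thesis using F1 by simp
      qed
    qed
  next
    assume H: "\<forall>k. gvec g k k = 0 \<longrightarrow> k \<bullet> (A1 *v k) = 0"
    show "null_cone_preserving g T"
      unfolding null_cone_preserving_def Let_def
    proof (intro allI impI)
      fix k assume "null_vec g k"
      then have "gvec g (k v* mixed g T) (k v* mixed g T) = 0"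
        using H F1 by (simp add: null_vec_def)
      then show "k v* mixed g T = 0 \<or> null_vec g (k v* mixed g T)"
        by (auto simp: null_vec_def)
    qed
  qed
  have bi2: "(\<forall>k. null_vec g k \<longrightarrow> (let w = mixed g T *v (g *v k) in w = 0 \<or> null_cov g w))
     \<longleftrightarrow> (\<forall>k. gvec g k k = 0 \<longrightarrow> k \<bullet> (A2 *v k) = 0)"
  proof
    assume H: "\<forall>k. null_vec g k \<longrightarrow> (let w = mixed g T *v (g *v k) in w = 0 \<or> null_cov g w)"
    show "\<forall>k. gvec g k k = 0 \<longrightarrow> k \<bullet> (A2 *v k) = 0"
    proof (intro allI impI)
      fix k :: "real^'n" assume kk: "gvec g k k = 0"
      show "k \<bullet> (A2 *v k) = 0"
      proof (cases "k = 0")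
        case True then show ?thesis by simp
      next
        case False
        then have "null_vec g k" using kk by (simp add: null_vec_def)
        then have "mixed g T *v (g *v k) = 0 \<or> null_cov g (mixed g T *v (g *v k))"
          using H unfolding Let_def by blast
        then have "gcov g (mixed g T *v (g *v k)) (mixed g T *v (g *v k)) = 0"
          by (auto simp: null_cov_def gcov_def)
        then show ?thesis using F2 by simp
      qed
    qed
  next
    assume H: "\<forall>k. gvec g k k = 0 \<longrightarrow> k \<bullet> (A2 *v k) = 0"
    show "\<forall>k. null_vec g k \<longrightarrow> (let w = mixed g T *v (g *v k) in w = 0 \<or> null_cov g w)"
      unfolding Let_def
    proof (intro allI impI)
      fix k assume "null_vec g k"
      then have "gcov g (mixed g T *v (g *v k)) (mixed g T *v (g *v k)) = 0"
        using H F2 by (simp add: null_vec_def)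
      then show "mixed g T *v (g *v k) = 0 \<or> null_cov g (mixed g T *v (g *v k))"
        by (auto simp: null_cov_def)
    qed
  qed
  have m0: "mat 0 = (0::real^'n^'n)" by (simp add: vec_eq_iff mat_def)
  have d0: "det (0::real^'n^'n) = 0" using det_0 m0 by metis
  have Z1: "A1 = 0 \<Longrightarrow> det T = 0" using dA1 dG d0 by simp
  have Z2: "A2 = 0 \<Longrightarrow> det T = 0" using dA2 dG d0 by simp
  have Y1: "det T = 0 \<Longrightarrow> (\<forall>k. gvec g k k = 0 \<longrightarrow> k \<bullet> (A1 *v k) = 0) \<Longrightarrow> A1 = 0"
    using zero_lemma[OF lor sA1, of T] dA1 G_def by blast
  have Y2: "det T = 0 \<Longrightarrow> (\<forall>k. gvec g k k = 0 \<longrightarrow> k \<bullet> (A2 *v k) = 0) \<Longrightarrow> A2 = 0"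
    using zero_lemma[OF lor sA2, of T] dA2 G_def by blast
  have q0: "A = 0 \<Longrightarrow> \<forall>k. gvec g k k = 0 \<longrightarrow> k \<bullet> (A *v k) = 0" for A :: "real^'n^'n" by simp
  have part1: "A1 = 0 \<longleftrightarrow> (singular_map g T \<and> null_cone_preserving g T)"
    unfolding sing ncp
  proof
    assume "A1 = 0" then show "det T = 0 \<and> (\<forall>k. gvec g k k = 0 \<longrightarrow> k \<bullet> (A1 *v k) = 0)"
      using Z1 q0 by blast
  next
    assume "det T = 0 \<and> (\<forall>k. gvec g k k = 0 \<longrightarrow> k \<bullet> (A1 *v k) = 0)"
    then show "A1 = 0" using Y1 by blast
  qed
  have part3: "(A1 = 0 \<and> A2 = 0) \<longleftrightarrow> (singular_map g T \<and> null_cone_bi_preserving g T)"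
    unfolding null_cone_bi_preserving_def sing ncp bi2
  proof
    assume H: "A1 = 0 \<and> A2 = 0"
    then show "det T = 0 \<and> (\<forall>k. gvec g k k = 0 \<longrightarrow> k \<bullet> (A1 *v k) = 0) \<and> (\<forall>k. gvec g k k = 0 \<longrightarrow> k \<bullet> (A2 *v k) = 0)"
      using Z1 q0[of A1] q0[of A2] by blast
  next
    assume "det T = 0 \<and> (\<forall>k. gvec g k k = 0 \<longrightarrow> k \<bullet> (A1 *v k) = 0) \<and> (\<forall>k. gvec g k k = 0 \<longrightarrow> k \<bullet> (A2 *v k) = 0)"
    then show "A1 = 0 \<and> A2 = 0" using Y1 Y2 by blast
  qed
  have ent: "(outer a b ** G ** transpose (outer a b)) = 0 \<longleftrightarrow> (\<forall>i j. a$i * a$j * gcov g b b = 0)" for a b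
    by (simp add: vec_eq_iff outer_entry gcov_def G_def)
  have outA2: "transpose (outer a b) ** G ** outer a b = outer b a ** G ** transpose (outer b a)" for a b
    by (simp add: outer_transpose)
  obtain j where j: "j \<noteq> i0"
  proof -
    have "\<exists>j::'n. j \<noteq> i0"
    proof (rule ccontr)
      assume "\<not> (\<exists>j::'n. j \<noteq> i0)"
      then have "(UNIV::'n set) = {i0}" by auto
      then have "CARD('n) = card {i0}" by (rule arg_cong)
      then have "CARD('n) = 1" by simp
      then show False using dim by simp
    qed
    then show ?thesis using that by blast
  qed
  define k0 where "k0 = Q *v (axis i0 1 + axis j 1)"
  have k0: "null_cov g k0"
  proof -
    have "axis i0 1 + axis j 1 \<noteq> (0::real^'n)"
      using j by (simp add: vec_eq_iff axis_def) (metis)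
    then have "k0 \<noteq> 0" unfolding k0_def
      using Qi by (metis inj_matrix_vector_mult injD matrix_vector_mult_0_right)
    moreover have "gcov g k0 k0 = 0"
      unfolding gcov_def G_def[symmetric] k0_def coords EQ etam_form
    proof -
      have "axis j 1 $ i0 = (0::real)" using j by (simp add: axis_def)
      then show "2 * (axis i0 1 + axis j 1) $ i0 * (axis i0 1 + axis j 1) $ i0 -
        (axis i0 1 + axis j (1::real)) \<bullet> (axis i0 1 + axis j 1) = 0"
        using j by (simp add: inner_add_left inner_add_right inner_axis_axis)
    qed
    ultimately show ?thesis by (simp add: null_cov_def)
  qed
  have part2: "A1 = 0 \<longleftrightarrow> (\<exists>s k. null_cov g k \<and> T = outer s k)"
  proof
    assume H: "A1 = 0"
    have rows: "T$a \<bullet> (G *v T$b) = 0" for a b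
      using H row_lemma[of T G T a b] by (simp add: A1_def)
    show "\<exists>s k. null_cov g k \<and> T = outer s k"
    proof (cases "T = 0")
      case True
      have "T = outer 0 k0" using True by (simp add: outer_def vec_eq_iff)
      then show ?thesis using k0 by blast
    next
      case False
      then obtain a0 where a0: "T$a0 \<noteq> 0" by (auto simp: vec_eq_iff)
      define k where "k = T$a0"
      have "\<exists>c. T$b = c *\<^sub>R k" for b
        using par_h[OF Qi EQ rows[of a0 a0] rows[of b b] rows[of a0 b]] a0 k_def by blast
      then have sc: "T$b = (SOME c. T$b = c *\<^sub>R k) *\<^sub>R k" for b by (meson someI_ex)
      define s where "s = (\<chi> b. SOME c. T$b = c *\<^sub>R k)"
      have Tb: "T$b = s$b *\<^sub>R k" for b unfolding s_def using sc[of b] by simp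
      have "T = outer s k"
      proof (subst vec_eq_iff, intro allI)
        fix b show "T$b = outer s k $ b" by (simp only: Tb outer_row)
      qed
      moreover have "null_cov g k" using a0 rows[of a0 a0] by (simp add: null_cov_def gcov_def k_def G_def)
      ultimately show ?thesis by blast
    qed
  next
    assume "\<exists>s k. null_cov g k \<and> T = outer s k"
    then obtain s k where kk: "null_cov g k" and T: "T = outer s k" by blast
    have "gcov g k k = 0" using kk by (simp add: null_cov_def)
    then show "A1 = 0" unfolding A1_def T using ent[of s k] by simp
  qed
  have part4: "(A1 = 0 \<and> A2 = 0) \<longleftrightarrow> (T = 0 \<or> (\<exists>n k. null_cov g n \<and> null_cov g k \<and> T = outer n k))"
  proof
    assume H: "A1 = 0 \<and> A2 = 0"
    then obtain s k where k: "null_cov g k" and T: "T = outer s k" using part2 by blast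
    have "outer k s ** G ** transpose (outer k s) = 0" using H T outA2[of s k] unfolding A2_def by simp
    then have "\<forall>i j. k$i * k$j * gcov g s s = 0" using ent[of k s] by simp
    moreover obtain i where "k$i \<noteq> 0" using k by (auto simp: null_cov_def vec_eq_iff)
    ultimately have ss: "gcov g s s = 0" by (metis mult_eq_0_iff)
    show "T = 0 \<or> (\<exists>n k. null_cov g n \<and> null_cov g k \<and> T = outer n k)"
    proof (cases "s = 0")
      case True then show ?thesis using T by (simp add: outer_def vec_eq_iff)
    next
      case False then show ?thesis using T k ss by (auto simp: null_cov_def)
    qed
  next
    assume "T = 0 \<or> (\<exists>n k. null_cov g n \<and> null_cov g k \<and> T = outer n k)"
    then show "A1 = 0 \<and> A2 = 0"
    proof
      assume "T = 0" then show ?thesis by (simp add: A1_def A2_def)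
    next
      assume "\<exists>n k. null_cov g n \<and> null_cov g k \<and> T = outer n k"
      then obtain n k where nn: "null_cov g n" and kk: "null_cov g k" and T: "T = outer n k" by blast
      have "gcov g k k = 0" "gcov g n n = 0" using kk nn by (simp_all add: null_cov_def)
      then show ?thesis unfolding A1_def A2_def T outA2 using ent[of n k] ent[of k n] by simp
    qed
  qed
  have part5: "(A1 = 0 \<and> A2 = 0) \<longrightarrow> (T \<in> DP g tau \<or> - T \<in> DP g tau)"
  proof
    assume "A1 = 0 \<and> A2 = 0"
    then have "T = 0 \<or> (\<exists>n k. null_cov g n \<and> null_cov g k \<and> T = outer n k)" using part4 by blast
    then show "T \<in> DP g tau \<or> - T \<in> DP g tau"
    proof
      assume "T = 0" then show ?thesis by (simp add: DP_def)
    next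
      assume "\<exists>n k. null_cov g n \<and> null_cov g k \<and> T = outer n k"
      then obtain n k where n: "null_cov g n" and k: "null_cov g k" and T: "T = outer n k" by blast
      have val: "u \<bullet> (T *v v) = (n \<bullet> u) * (k \<bullet> v)" for u v
        by (simp add: T outer_mv inner_commute)
      have valm: "u \<bullet> ((- T) *v v) = - ((n \<bullet> u) * (k \<bullet> v))" for u v
      proof -
        have "- T = outer (- n) k" by (simp add: T outer_def vec_eq_iff)
        then show ?thesis by (simp add: outer_mv inner_commute)
      qed
      have sn: "n \<bullet> tau \<noteq> 0 \<and> (n \<bullet> tau) * (n \<bullet> u) \<ge> 0" if "causal_future g tau u" for u
        using that unfolding causal_future_def using cov_sign[OF lor n tau] by blast
      have sk: "k \<bullet> tau \<noteq> 0 \<and> (k \<bullet> tau) * (k \<bullet> u) \<ge> 0" if "causal_future g tau u" for u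
        using that unfolding causal_future_def using cov_sign[OF lor k tau] by blast
      have prod: "((n \<bullet> tau) * (k \<bullet> tau)) * ((n \<bullet> u) * (k \<bullet> v)) \<ge> 0"
        if "causal_future g tau u" "causal_future g tau v" for u v
      proof -
        have "0 \<le> ((n \<bullet> tau) * (n \<bullet> u)) * ((k \<bullet> tau) * (k \<bullet> v))"
          using sn[OF that(1)] sk[OF that(2)] by (simp only: mult_nonneg_nonneg)
        then show ?thesis by (simp add: algebra_simps)
      qed
      show ?thesis
      proof (cases "(n \<bullet> tau) * (k \<bullet> tau) > 0")
        case True
        have "T \<in> DP g tau" unfolding DP_def
        proof (intro CollectI allI impI)
          fix u v assume "causal_future g tau u" "causal_future g tau v"
          from prod[OF this] True show "u \<bullet> (T *v v) \<ge> 0"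
            unfolding val by (simp add: zero_le_mult_iff)
        qed
        then show ?thesis by blast
      next
        case False
        have "- T \<in> DP g tau" unfolding DP_def
        proof (intro CollectI allI impI)
          fix u v assume uv: "causal_future g tau u" "causal_future g tau v"
          have "(n \<bullet> tau) * (k \<bullet> tau) \<noteq> 0" using sn[OF uv(1)] sk[OF uv(1)] by simp
          then have neg: "(n \<bullet> tau) * (k \<bullet> tau) < 0" using False by linarith
          have "(n \<bullet> u) * (k \<bullet> v) \<le> 0" using negh[OF prod[OF uv] neg] .
          then show "u \<bullet> ((- T) *v v) \<ge> 0" unfolding valm by simp
        qed
        then show ?thesis by blast
      qed
    qed
  qed
  show ?thesis
    using part1 part2 part3 part4 part5 unfolding A1_def A2_def G_def by blast
qed

end
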